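(* Let $\mathfrak{g}$ be a real nilpotent Lie algebra with a (possibly indefinite) metric whose Ricci operator satisfies $\operatorname{Ric}=\lambda\,\mathrm{id}+D$ with $\lambda\in\mathbb{R}$ and $D$ a derivation of $\mathfrak{g}$. Then $\operatorname{Tr}D^2=-\lambda\operatorname{Tr}D$ and $\operatorname{Tr}\operatorname{Ric}^2=\lambda\operatorname{Tr}\operatorname{Ric}$.
   Context: A metric on a Lie algebra is a nondegenerate symmetric bilinear form, possibly indefinite. The Ricci operator is that of the corresponding left-invariant pseudo-Riemannian metric on the simply connected Lie group, evaluated at the identity. *)

theory Defs
  imports "HOL-Analysis.Analysis"
begin

definition lie_algebra :: "(real^'n \<Rightarrow> real^'n \<Rightarrow> real^'n) \<Rightarrow> bool" where
  "lie_algebra br \<longleftrightarrow> bilinear br \<and> (\<forall>x. br x x = 0) \<and>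
     (\<forall>x y z. br x (br y z) + br y (br z x) + br z (br x y) = 0)"

fun lower_central :: "(real^'n \<Rightarrow> real^'n \<Rightarrow> real^'n) \<Rightarrow> nat \<Rightarrow> (real^'n) set" where
  "lower_central br 0 = UNIV"
| "lower_central br (Suc k) = span {br x y | x y. y \<in> lower_central br k}"

definition nilpotent_lie :: "(real^'n \<Rightarrow> real^'n \<Rightarrow> real^'n) \<Rightarrow> bool" where
  "nilpotent_lie br \<longleftrightarrow> (\<exists>k. lower_central br k = {0})"

definition metric :: "(real^'n \<Rightarrow> real^'n \<Rightarrow> real) \<Rightarrow> bool" where
  "metric g \<longleftrightarrow> bilinear g \<and> (\<forall>x y. g x y = g y x) \<and> (\<forall>x. (\<forall>y. g x y = 0) \<longrightarrow> x = 0)"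

text \<open>Levi-Civita connection of the left-invariant metric (Koszul formula for left-invariant fields).\<close>
definition levi_civita :: "(real^'n \<Rightarrow> real^'n \<Rightarrow> real^'n) \<Rightarrow> (real^'n \<Rightarrow> real^'n \<Rightarrow> real)
     \<Rightarrow> real^'n \<Rightarrow> real^'n \<Rightarrow> real^'n" where
  "levi_civita br g X Y = (THE v. \<forall>Z. g v Z =
       (g (br X Y) Z - g (br Y Z) X + g (br Z X) Y) / 2)"

definition curvature :: "(real^'n \<Rightarrow> real^'n \<Rightarrow> real^'n) \<Rightarrow> (real^'n \<Rightarrow> real^'n \<Rightarrow> real)
     \<Rightarrow> real^'n \<Rightarrow> real^'n \<Rightarrow> real^'n \<Rightarrow> real^'n" where
  "curvature br g X Y Z = (let nb = levi_civita br g in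
       nb X (nb Y Z) - nb Y (nb X Z) - nb (br X Y) Z)"

definition tr :: "(real^'n \<Rightarrow> real^'n) \<Rightarrow> real" where
  "tr f = (\<Sum>i\<in>UNIV. f (axis i 1) $ i)"

definition ricci_tensor :: "(real^'n \<Rightarrow> real^'n \<Rightarrow> real^'n) \<Rightarrow> (real^'n \<Rightarrow> real^'n \<Rightarrow> real)
     \<Rightarrow> real^'n \<Rightarrow> real^'n \<Rightarrow> real" where
  "ricci_tensor br g Y Z = tr (\<lambda>X. curvature br g X Y Z)"

definition ricci_operator :: "(real^'n \<Rightarrow> real^'n \<Rightarrow> real^'n) \<Rightarrow> (real^'n \<Rightarrow> real^'n \<Rightarrow> real)
     \<Rightarrow> real^'n \<Rightarrow> real^'n" where
  "ricci_operator br g Y = (THE v. \<forall>Z. g v Z = ricci_tensor br g Y Z)"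

definition derivation :: "(real^'n \<Rightarrow> real^'n \<Rightarrow> real^'n) \<Rightarrow> (real^'n \<Rightarrow> real^'n) \<Rightarrow> bool" where
  "derivation br D \<longleftrightarrow> linear D \<and> (\<forall>x y. D (br x y) = br (D x) y + br x (D y))"

end

theory Submission
  imports Defs
begin


lemma tr_matrix: "tr f = trace (matrix f)"
  by (simp add: tr_def trace_def matrix_def)

lemma tr_comm: assumes "linear A" "linear B" shows "tr (A \<circ> B) = tr (B \<circ> A)"
proof -
  have "tr (A \<circ> B) = trace (matrix A ** matrix B)"
    by (simp only: tr_matrix matrix_compose[OF assms(2,1)])
  also have "\<dots> = trace (matrix B ** matrix A)" by (rule trace_mul_sym)
  also have "\<dots> = tr (B \<circ> A)"
    by (simp only: tr_matrix matrix_compose[OF assms(1,2)])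
  finally show ?thesis .
qed

lemma tr_cong: assumes "\<And>x. f x = h x" shows "tr f = tr h"
proof -
  have "f = h" by (rule ext) (rule assms)
  then show ?thesis by simp
qed

lemma proj_exists:
  fixes S :: "(real^'n) set"
  assumes "subspace S"
  shows "\<exists>P. linear P \<and> (\<forall>x. P x \<in> S) \<and> (\<forall>x\<in>S. P x = x)"
proof -
  obtain B where B: "B \<subseteq> S" "independent B" "S \<subseteq> span B"
    by (rule basis_exists[of S]) blast
  obtain C where C: "B \<subseteq> C" "independent C" "UNIV \<subseteq> span C"
    using maximal_independent_subset_extend[OF subset_UNIV B(2)] by metis
  obtain P where P: "linear P" "\<forall>x\<in>C. P x = (if x \<in> B then x else 0)"
    using linear_independent_extend[OF C(2), of "\<lambda>x. if x \<in> B then x else 0"] by blast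
  have PB: "\<And>x. x \<in> B \<Longrightarrow> P x = id x" using P(2) C(1) by auto
  have "\<forall>x\<in>span B. P x = x" using linear_eq_on_span[OF P(1) linear_id PB] by simp
  hence PS: "\<forall>x\<in>S. P x = x" using B by auto
  have "P ` C \<subseteq> S" using P(2) B(1) assms subspace_0 by auto
  hence "span (P ` C) \<subseteq> S" using assms by (simp add: span_minimal)
  moreover have "P ` span C = span (P ` C)" by (simp add: span_linear_image P(1))
  ultimately have sub: "P ` span C \<subseteq> S" by simp
  have "P x \<in> S" for x
  proof -
    have "x \<in> span C" using C(3) by auto
    then show ?thesis using sub by blast
  qed
  hence "\<forall>x. P x \<in> S" by blast
  with PS P(1) show ?thesis by blast
qed

lemma tr_nil:
  fixes T :: "real^'n \<Rightarrow> real^'n" and V :: "nat \<Rightarrow> (real^'n) set"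
  assumes lin: "linear T" and sub: "\<And>k. subspace (V k)" and dec: "\<And>k. V (Suc k) \<subseteq> V k"
    and V0: "V 0 = UNIV" and VN: "V N = {0}" and TV: "\<And>k x. x \<in> V k \<Longrightarrow> T x \<in> V (Suc k)"
  shows "tr T = 0"
proof -
  have "\<forall>k. \<exists>P. linear P \<and> (\<forall>x. P x \<in> V k) \<and> (\<forall>x\<in>V k. P x = x)"
    using proj_exists sub by blast
  then obtain P where P: "\<And>k. linear (P k)" "\<And>k x. P k x \<in> V k" "\<And>k x. x \<in> V k \<Longrightarrow> P k x = x"
    by metis
  have step: "tr (T \<circ> P k) = tr (T \<circ> P (Suc k))" for k
  proof -
    have "tr (T \<circ> P k) = tr (P (Suc k) \<circ> (T \<circ> P k))"
      using P TV by (intro tr_cong) auto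
    also have "\<dots> = tr ((T \<circ> P k) \<circ> P (Suc k))"
      by (rule tr_comm) (use P lin in \<open>auto intro: linear_compose\<close>)
    also have "\<dots> = tr (T \<circ> P (Suc k))"
      using P dec by (intro tr_cong) (auto simp: subset_iff)
    finally show ?thesis .
  qed
  have h1: "tr (T \<circ> P 0) = tr (T \<circ> P k)" for k
  proof (induction k)
    case (Suc k) then show ?case using step[of k] by (simp add: o_def)
  qed simp
  have h2: "tr (T \<circ> P 0) = tr T" using P V0 by (intro tr_cong) auto
  have h3: "tr (T \<circ> P N) = 0"
    using P(2)[of N] VN linear_0[OF lin] by (simp add: tr_def)
  show ?thesis using h1[of N] h2 h3 by linarith
qed

locale nilmet =
  fixes br :: "real^'n \<Rightarrow> real^'n \<Rightarrow> real^'n" and g :: "real^'n \<Rightarrow> real^'n \<Rightarrow> real"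
  assumes lie: "lie_algebra br" and nil: "nilpotent_lie br" and met: "metric g"
begin

lemma bl: "bilinear br" using lie by (simp add: lie_algebra_def)
lemma alt: "br x x = 0" using lie by (simp add: lie_algebra_def)
lemma bg: "bilinear g" using met by (simp add: metric_def)
lemma gsym: "g x y = g y x" using met by (simp add: metric_def)
lemma nondeg: "(\<And>y. g x y = 0) \<Longrightarrow> x = 0" using met by (simp add: metric_def)

lemmas brs = bilinear_ladd[OF bl] bilinear_radd[OF bl] bilinear_lmul[OF bl] bilinear_rmul[OF bl]
  bilinear_lneg[OF bl] bilinear_rneg[OF bl] bilinear_lsub[OF bl] bilinear_rsub[OF bl]
  bilinear_lzero[OF bl] bilinear_rzero[OF bl]
lemmas gs = bilinear_ladd[OF bg] bilinear_radd[OF bg] bilinear_lmul[OF bg] bilinear_rmul[OF bg]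
  bilinear_lneg[OF bg] bilinear_rneg[OF bg] bilinear_lsub[OF bg] bilinear_rsub[OF bg]
  bilinear_lzero[OF bg] bilinear_rzero[OF bg]

lemma anti: "br y x = - br x y"
proof -
  have "0 = br (x + y) (x + y)" by (simp add: alt)
  also have "\<dots> = br x y + br y x"
    by (simp only: bilinear_ladd[OF bl] bilinear_radd[OF bl]) (simp add: alt)
  finally have "br x y + br y x = 0" by simp
  thus ?thesis by (simp add: eq_neg_iff_add_eq_0 add.commute)
qed

lemma lin_l: "linear (\<lambda>u. br u y)" using bl by (simp add: bilinear_def)
lemma lin_r: "linear (\<lambda>u. br x u)" using bl by (simp add: bilinear_def)

abbreviation "LC \<equiv> lower_central br"

lemma lc_sub: "subspace (LC k)"
  by (cases k) (auto simp: subspace_UNIV subspace_span)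

lemma lc_dec: "LC (Suc k) \<subseteq> LC k"
proof (induction k)
  case 0 then show ?case by simp
next
  case (Suc k)
  have "{br x y | x y. y \<in> LC (Suc k)} \<subseteq> {br x y | x y. y \<in> LC k}" using Suc by blast
  then show ?case by (simp add: span_mono)
qed

lemma lc_br: "y \<in> LC k \<Longrightarrow> br x y \<in> LC (Suc k)"
  by (auto intro!: span_base)

lemma lc_br': "y \<in> LC k \<Longrightarrow> br y x \<in> LC (Suc k)"
  using lc_br[of y k x] anti[of y x] lc_sub[of "Suc k"] by (simp add: subspace_neg)

lemma trace_zero:
  assumes "linear T" "\<And>k x. x \<in> LC k \<Longrightarrow> T x \<in> LC (Suc k)"
  shows "tr T = 0"
proof -
  obtain N where "LC N = {0}" using nil by (auto simp: nilpotent_lie_def)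
  then show ?thesis
    by (intro tr_nil[of T LC N]) (use assms lc_sub lc_dec in auto)
qed

lemma N1: "tr (\<lambda>u. br u v) = 0"
  by (rule trace_zero[OF lin_l lc_br'])

lemma N2: "tr (\<lambda>u. br (br u y) z) = 0"
proof (rule trace_zero)
  show "linear (\<lambda>u. br (br u y) z)"
    using linear_compose[OF lin_l lin_l] by (simp add: o_def)
  fix k x assume "x \<in> LC k"
  then have "br (br x y) z \<in> LC (Suc (Suc k))" by (intro lc_br' )
  then show "br (br x y) z \<in> LC (Suc k)" using lc_dec by blast
qed

lemma N3: "tr (\<lambda>u. br y (br z u)) = 0"
proof (rule trace_zero)
  show "linear (\<lambda>u. br y (br z u))"
    using linear_compose[OF lin_r lin_r] by (simp add: o_def)
  fix k x assume "x \<in> LC k"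
  then have "br y (br z x) \<in> LC (Suc (Suc k))" by (intro lc_br lc_br)
  then show "br y (br z x) \<in> LC (Suc k)" using lc_dec by blast
qed

lemma g_inj: "(\<And>z. g u z = g v z) \<Longrightarrow> u = v"
proof -
  assume "\<And>z. g u z = g v z"
  hence "\<And>z. g (u - v) z = 0" by (simp add: gs)
  thus "u = v" using nondeg by force
qed

lemma lin_expand:
  fixes \<phi> :: "real^'n \<Rightarrow> 'b::real_vector"
  assumes "linear \<phi>" shows "\<phi> z = (\<Sum>j\<in>UNIV. z$j *\<^sub>R \<phi> (axis j 1))"
proof -
  have "\<phi> z = \<phi> (\<Sum>j\<in>UNIV. z$j *\<^sub>R axis j 1)"
    using basis_expansion[of z] by (simp add: scalar_mult_eq_scaleR)
  also have "\<dots> = (\<Sum>j\<in>UNIV. z$j *\<^sub>R \<phi> (axis j 1))"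
    using assms by (simp add: linear_sum linear_scale o_def)
  finally show ?thesis .
qed

lemma lin_gl: "linear (\<lambda>x. g x y)" using bg by (simp add: bilinear_def)
lemma lin_gr: "linear (\<lambda>y. g x y)" using bg by (simp add: bilinear_def)

lemma riesz: assumes "linear \<phi>" shows "\<exists>v. \<forall>z. g v z = \<phi> z"
proof -
  define \<Phi> where "\<Phi> v = (\<chi> j. g v (axis j 1))" for v
  have lin: "linear \<Phi>" unfolding \<Phi>_def
    by (rule linearI) (simp_all add: vec_eq_iff gs)
  have "inj \<Phi>"
  proof (rule injI)
    fix u v assume "\<Phi> u = \<Phi> v"
    hence "\<And>j. g u (axis j 1) = g v (axis j 1)" by (simp add: \<Phi>_def vec_eq_iff)
    hence "\<And>z. g u z = g v z" by (subst (1 2) lin_expand[OF lin_gr]) simp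
    thus "u = v" by (rule g_inj)
  qed
  hence "surj \<Phi>" using lin linear_inj_imp_surj by blast
  then obtain v where v: "\<Phi> v = (\<chi> j. \<phi> (axis j 1))" by (metis surjD)
  hence "\<And>j. g v (axis j 1) = \<phi> (axis j 1)" by (simp add: \<Phi>_def vec_eq_iff)
  have "g v z = \<phi> z" for z
  proof -
    have "g v z = (\<Sum>j\<in>UNIV. z$j *\<^sub>R g v (axis j 1))" by (rule lin_expand[OF lin_gr])
    also have "\<dots> = (\<Sum>j\<in>UNIV. z$j *\<^sub>R \<phi> (axis j 1))" using v by (simp add: \<Phi>_def vec_eq_iff)
    also have "\<dots> = \<phi> z" by (rule lin_expand[OF assms, symmetric])
    finally show ?thesis .
  qed
  thus ?thesis by blast
qed

definition ff :: "'n \<Rightarrow> real^'n" where "ff i = (SOME v. \<forall>z. g v z = z $ i)"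

lemma gf: "g (ff i) z = z $ i"
proof -
  have "linear (\<lambda>z::real^'n. z $ i)" by (rule linearI) simp_all
  from riesz[OF this] show ?thesis unfolding ff_def by (rule someI_ex[where P="\<lambda>v. \<forall>z. g v z = z $ i", THEN spec])
qed

lemma gf': "g z (ff i) = z $ i" using gf gsym by metis

lemma ff_sym: "ff i $ j = ff j $ i" using gf[of i "ff j"] gf[of j "ff i"] gsym by metis

lemma exp2: "x = (\<Sum>i\<in>UNIV. g x (axis i 1) *\<^sub>R ff i)"
proof (rule g_inj)
  fix z
  have "g (\<Sum>i\<in>UNIV. g x (axis i 1) *\<^sub>R ff i) z = (\<Sum>i\<in>UNIV. g x (axis i 1) * z $ i)"
    by (subst linear_sum[OF lin_gl]) (simp add: gs gf real_scaleR_def)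
  also have "\<dots> = g x z" by (subst (2) lin_expand[OF lin_gr]) (simp add: mult.commute)
  finally show "g x z = g (\<Sum>i\<in>UNIV. g x (axis i 1) *\<^sub>R ff i) z" by simp
qed

lemma C1: assumes "linear \<phi>" shows "(\<Sum>i\<in>UNIV. g x (axis i 1) * \<phi> (ff i)) = \<phi> x"
proof -
  have "\<phi> x = \<phi> (\<Sum>i\<in>UNIV. g x (axis i 1) *\<^sub>R ff i)" by (subst exp2) simp
  also have "\<dots> = (\<Sum>i\<in>UNIV. g x (axis i 1) * \<phi> (ff i))"
    using assms by (simp add: linear_sum linear_scale o_def)
  finally show ?thesis by simp
qed

lemma C2: assumes "linear \<phi>" shows "(\<Sum>i\<in>UNIV. g x (ff i) * \<phi> (axis i 1)) = \<phi> x"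
  by (subst (2) lin_expand[OF assms]) (simp add: gf')

lemma Csym: assumes "bilinear B"
  shows "(\<Sum>i\<in>UNIV. B (axis i 1) (ff i)) = (\<Sum>i\<in>UNIV. B (ff i) (axis i 1)::real)"
proof -
  have l1: "linear (B u)" for u using assms by (simp add: bilinear_def)
  have l2: "linear (\<lambda>x. B x v)" for v using assms by (simp add: bilinear_def)
  have "(\<Sum>i\<in>UNIV. B (axis i 1) (ff i)) = (\<Sum>i\<in>UNIV. \<Sum>j\<in>UNIV. ff i $ j * B (axis i 1) (axis j 1))"
    by (intro sum.cong refl, subst lin_expand[OF l1]) (simp add: real_scaleR_def)
  also have "\<dots> = (\<Sum>j\<in>UNIV. \<Sum>i\<in>UNIV. ff i $ j * B (axis i 1) (axis j 1))"
    by (rule sum.swap)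
  also have "\<dots> = (\<Sum>j\<in>UNIV. \<Sum>i\<in>UNIV. ff j $ i * B (axis i 1) (axis j 1))"
    by (intro sum.cong refl) (subst ff_sym, rule refl)
  also have "\<dots> = (\<Sum>i\<in>UNIV. B (ff i) (axis i 1))"
    by (intro sum.cong refl, subst (2) lin_expand[OF l2]) (simp add: real_scaleR_def)
  finally show ?thesis .
qed

lemma tr_g: "tr h = (\<Sum>i\<in>UNIV. g (ff i) (h (axis i 1)))"
  by (simp add: tr_def gf)

end



lemma bilI:
  fixes B :: "real^'n \<Rightarrow> real^'n \<Rightarrow> real"
  assumes "\<And>u v w. B (u + v) w = B u w + B v w" "\<And>c u w. B (c *\<^sub>R u) w = c * B u w"
    "\<And>u v w. B w (u + v) = B w u + B w v" "\<And>c u w. B w (c *\<^sub>R u) = c * B w u"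
  shows "bilinear B"
  unfolding bilinear_def by (auto intro!: linearI simp: assms)

context nilmet begin

abbreviation E :: "'n \<Rightarrow> real^'n" where "E k \<equiv> axis k 1"

lemma N1': "tr (\<lambda>u. br v u) = 0"
  by (rule trace_zero[OF lin_r lc_br])

lemma trs: "(\<Sum>i\<in>UNIV. g (h (E i)) (ff i)) = tr h"
  by (simp add: tr_def gf')

lemma trs': "(\<Sum>i\<in>UNIV. g (ff i) (h (E i))) = tr h"
  by (simp add: tr_def gf)

definition KK where "KK X Y Z = (g (br X Y) Z - g (br Y Z) X + g (br Z X) Y) / 2"

lemma K_lin: "linear (\<lambda>Z. KK X Y Z)"
  unfolding KK_def by (rule linearI) (simp_all add: gs brs field_simps)

lemma nb: "g (levi_civita br g X Y) Z = KK X Y Z"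
proof -
  obtain v where v: "\<forall>Z. g v Z = KK X Y Z" using riesz[OF K_lin] by blast
  have "levi_civita br g X Y = v"
    unfolding levi_civita_def
  proof (rule the1_equality)
    show "\<exists>!v. \<forall>Z. g v Z = (g (br X Y) Z - g (br Y Z) X + g (br Z X) Y) / 2"
      using v g_inj unfolding KK_def by metis
    show "\<forall>Z. g v Z = (g (br X Y) Z - g (br Y Z) X + g (br Z X) Y) / 2"
      using v unfolding KK_def by blast
  qed
  then show ?thesis using v by simp
qed

lemma K_skew: "KK X Y Z = - KK X Z Y"
  unfolding KK_def by (simp add: anti[of Z X] anti[of Y X] anti[of Z Y] gs gsym[of "br X Y" Z] gsym[of "br X Z" Y] gsym[of "br Y Z" X] field_simps)

lemma curv: "g (curvature br g X Y Z) W =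
   KK X (levi_civita br g Y Z) W - KK Y (levi_civita br g X Z) W - KK (br X Y) Z W"
  unfolding curvature_def Let_def by (simp add: gs nb)

lemma TT1: "(\<Sum>k\<in>UNIV. KK (E k) V (ff k)) = 0"
proof -
  have a: "(\<Sum>k\<in>UNIV. g (br (E k) V) (ff k)) = 0" using N1[of V] trs[of "\<lambda>u. br u V"] by simp
  have "(\<Sum>k\<in>UNIV. g (br V (ff k)) (E k)) = (\<Sum>k\<in>UNIV. g (br V (E k)) (ff k))"
    by (rule Csym[where B="\<lambda>u v. g (br V v) u"]) (rule bilI; simp add: gs brs)
  also have "\<dots> = 0" using N1'[of V] trs[of "\<lambda>u. br V u"] by simp
  finally have b: "(\<Sum>k\<in>UNIV. g (br V (ff k)) (E k)) = 0" .
  have "(\<Sum>k\<in>UNIV. g (br (ff k) (E k)) V) = (\<Sum>k\<in>UNIV. g (br (E k) (ff k)) V)"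
    by (rule Csym[where B="\<lambda>u v. g (br v u) V"]) (rule bilI; simp add: gs brs)
  also have "\<dots> = - (\<Sum>k\<in>UNIV. g (br (ff k) (E k)) V)"
    by (simp add: anti[of "E k" "ff k" for k] gs sum_negf)
  finally have c: "(\<Sum>k\<in>UNIV. g (br (ff k) (E k)) V) = 0" by simp
  show ?thesis using a b c unfolding KK_def
    by (simp add: sum_divide_distrib[symmetric] sum.distrib sum_subtractf)
qed


lemma linI:
  fixes \<phi> :: "real^'n \<Rightarrow> real"
  assumes "\<And>u v. \<phi> (u + v) = \<phi> u + \<phi> v" "\<And>c u. \<phi> (c *\<^sub>R u) = c * \<phi> u"
  shows "linear \<phi>"
  by (rule linearI) (simp_all add: assms)

lemma C1': assumes "linear \<phi>" shows "(\<Sum>i\<in>UNIV. \<phi> (ff i) * g x (E i)) = \<phi> x"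
  using C1[OF assms, of x] by (simp add: mult.commute)

lemma C2': assumes "linear \<phi>" shows "(\<Sum>i\<in>UNIV. \<phi> (E i) * g x (ff i)) = \<phi> x"
  using C2[OF assms, of x] by (simp add: mult.commute)

abbreviation nb where "nb \<equiv> levi_civita br g"

lemma ric_expand: "ricci_tensor br g Y Z =
   (\<Sum>k\<in>UNIV. g (nb Y (ff k)) (nb (E k) Z)) - (\<Sum>k\<in>UNIV. KK (br (E k) Y) Z (ff k))"
proof -
  have "ricci_tensor br g Y Z = (\<Sum>k\<in>UNIV. g (curvature br g (E k) Y Z) (ff k))"
    unfolding ricci_tensor_def by (simp add: tr_def gf')
  also have "\<dots> = (\<Sum>k\<in>UNIV. KK (E k) (nb Y Z) (ff k) + g (nb Y (ff k)) (nb (E k) Z) - KK (br (E k) Y) Z (ff k))"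
  proof (intro sum.cong refl)
    fix k
    have "KK Y (nb (E k) Z) (ff k) = - g (nb Y (ff k)) (nb (E k) Z)"
      using K_skew[of Y "nb (E k) Z" "ff k"] nb[of Y "ff k" "nb (E k) Z"] by simp
    then show "g (curvature br g (E k) Y Z) (ff k) = KK (E k) (nb Y Z) (ff k) + g (nb Y (ff k)) (nb (E k) Z) - KK (br (E k) Y) Z (ff k)"
      by (simp add: curv)
  qed
  also have "\<dots> = (\<Sum>k\<in>UNIV. KK (E k) (nb Y Z) (ff k)) + (\<Sum>k\<in>UNIV. g (nb Y (ff k)) (nb (E k) Z)) - (\<Sum>k\<in>UNIV. KK (br (E k) Y) Z (ff k))"
    by (simp add: sum.distrib sum_subtractf)
  finally show ?thesis by (simp add: TT1)
qed

lemma T2_exp: "g (nb Y (ff k)) (nb (E k) Z) = (\<Sum>m\<in>UNIV. KK Y (ff k) (E m) * KK (E k) Z (ff m))"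
proof -
  have "(\<Sum>m\<in>UNIV. g (nb Y (ff k)) (E m) * g (ff m) (nb (E k) Z)) = g (nb Y (ff k)) (nb (E k) Z)"
    by (rule C1[OF lin_gl])
  then show ?thesis by (simp add: nb gsym[of "ff m" "nb (E k) Z" for m])
qed

end



context nilmet begin

lemma D11: "(\<Sum>k\<in>UNIV. \<Sum>m\<in>UNIV. g (br Y (ff k)) (E m) * g (br (E k) Z) (ff m)) = (\<Sum>k\<in>UNIV. g (br (E k) Z) (br Y (ff k)))"
  by (intro sum.cong refl) (rule C1[OF lin_gr])

lemma D12: "(\<Sum>k\<in>UNIV. \<Sum>m\<in>UNIV. g (br Y (ff k)) (E m) * g (br Z (ff m)) (E k)) = 0"
proof -
  have "(\<Sum>k\<in>UNIV. \<Sum>m\<in>UNIV. g (br Y (ff k)) (E m) * g (br Z (ff m)) (E k)) = (\<Sum>k\<in>UNIV. g (br Z (br Y (ff k))) (E k))"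
    by (intro sum.cong refl) (rule C1[where \<phi>="\<lambda>w. g (br Z w) (E k)" for k], rule linI, simp_all add: gs brs)
  also have "\<dots> = (\<Sum>k\<in>UNIV. g (br Z (br Y (E k))) (ff k))"
    by (rule Csym[where B="\<lambda>u v. g (br Z (br Y v)) u"]) (rule bilI; simp add: gs brs)
  also have "\<dots> = 0" using N3[of Z Y] trs[of "\<lambda>u. br Z (br Y u)"] by simp
  finally show ?thesis .
qed

lemma D13: "(\<Sum>k\<in>UNIV. \<Sum>m\<in>UNIV. g (br Y (ff k)) (E m) * g (br (ff m) (E k)) Z) = (\<Sum>k\<in>UNIV. g (br (br Y (ff k)) (E k)) Z)"
  by (intro sum.cong refl) (rule C1[where \<phi>="\<lambda>w. g (br w (E k)) Z" for k], rule linI, simp_all add: gs brs)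

lemma D21: "(\<Sum>k\<in>UNIV. \<Sum>m\<in>UNIV. g (br (ff k) (E m)) Y * g (br (E k) Z) (ff m)) = (\<Sum>k\<in>UNIV. g (br (ff k) (br (E k) Z)) Y)"
  by (intro sum.cong refl) (rule C2'[where \<phi>="\<lambda>w. g (br (ff k) w) Y" for k], rule linI, simp_all add: gs brs)

lemma D22: "(\<Sum>k\<in>UNIV. \<Sum>m\<in>UNIV. g (br (ff k) (E m)) Y * g (br Z (ff m)) (E k)) = (\<Sum>m\<in>UNIV. g (br (br Z (ff m)) (E m)) Y)"
  apply (subst sum.swap)
  by (intro sum.cong refl) (rule C1'[where \<phi>="\<lambda>w. g (br w (E m)) Y" for m], rule linI, simp_all add: gs brs)

lemma D31: "(\<Sum>k\<in>UNIV. \<Sum>m\<in>UNIV. g (br (E m) Y) (ff k) * g (br (E k) Z) (ff m)) = 0"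
proof -
  have "(\<Sum>k\<in>UNIV. \<Sum>m\<in>UNIV. g (br (E m) Y) (ff k) * g (br (E k) Z) (ff m)) = (\<Sum>m\<in>UNIV. g (br (br (E m) Y) Z) (ff m))"
    apply (subst sum.swap)
    by (intro sum.cong refl) (rule C2[where \<phi>="\<lambda>w. g (br w Z) (ff m)" for m], rule linI, simp_all add: gs brs)
  also have "\<dots> = 0" using N2[of Y Z] trs[of "\<lambda>u. br (br u Y) Z"] by simp
  finally show ?thesis .
qed

lemma D32: "(\<Sum>k\<in>UNIV. \<Sum>m\<in>UNIV. g (br (E m) Y) (ff k) * g (br Z (ff m)) (E k)) = (\<Sum>m\<in>UNIV. g (br Z (ff m)) (br (E m) Y))"
  apply (subst sum.swap)
  by (intro sum.cong refl) (rule C2[OF lin_gr])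

lemma D33: "(\<Sum>k\<in>UNIV. \<Sum>m\<in>UNIV. g (br (E m) Y) (ff k) * g (br (ff m) (E k)) Z) = (\<Sum>m\<in>UNIV. g (br (ff m) (br (E m) Y)) Z)"
  apply (subst sum.swap)
  by (intro sum.cong refl) (rule C2[where \<phi>="\<lambda>w. g (br (ff m) w) Z" for m], rule linI, simp_all add: gs brs)

lemma R1: "(\<Sum>k\<in>UNIV. g (br (E k) Z) (br Y (ff k))) = (\<Sum>m\<in>UNIV. g (br Z (ff m)) (br (E m) Y))"
proof -
  have "(\<Sum>k\<in>UNIV. g (br (E k) Z) (br Y (ff k))) = (\<Sum>k\<in>UNIV. g (br (ff k) Z) (br Y (E k)))"
    by (rule Csym[where B="\<lambda>u v. g (br u Z) (br Y v)"]) (rule bilI; simp add: gs brs)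
  also have "\<dots> = (\<Sum>m\<in>UNIV. g (br Z (ff m)) (br (E m) Y))"
    by (intro sum.cong refl) (simp add: anti[of "ff k" Z for k] anti[of Y "E k" for k] gs)
  finally show ?thesis .
qed

lemma R2: "(\<Sum>k\<in>UNIV. g (br (br Y (ff k)) (E k)) Z) = (\<Sum>m\<in>UNIV. g (br (ff m) (br (E m) Y)) Z)"
proof -
  have "(\<Sum>k\<in>UNIV. g (br (br Y (ff k)) (E k)) Z) = (\<Sum>k\<in>UNIV. g (br (br Y (E k)) (ff k)) Z)"
    by (rule Csym[where B="\<lambda>u v. g (br (br Y v) u) Z"]) (rule bilI; simp add: gs brs)
  also have "\<dots> = (\<Sum>m\<in>UNIV. g (br (ff m) (br (E m) Y)) Z)"
    by (intro sum.cong refl) (simp add: anti[of "br (E k) Y" "ff k" for k] anti[of Y "E k" for k] gs brs)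
  finally show ?thesis .
qed

lemma R3: "(\<Sum>m\<in>UNIV. g (br (br Z (ff m)) (E m)) Y) = (\<Sum>k\<in>UNIV. g (br (ff k) (br (E k) Z)) Y)"
proof -
  have "(\<Sum>k\<in>UNIV. g (br (br Z (ff k)) (E k)) Y) = (\<Sum>k\<in>UNIV. g (br (br Z (E k)) (ff k)) Y)"
    by (rule Csym[where B="\<lambda>u v. g (br (br Z v) u) Y"]) (rule bilI; simp add: gs brs)
  also have "\<dots> = (\<Sum>m\<in>UNIV. g (br (ff m) (br (E m) Z)) Y)"
    by (intro sum.cong refl) (simp add: anti[of "br (E k) Z" "ff k" for k] anti[of Z "E k" for k] gs brs)
  finally show ?thesis .
qed

lemma T3: "(\<Sum>k\<in>UNIV. KK (br (E k) Y) Z (ff k)) =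
   ((\<Sum>k\<in>UNIV. g (br (ff k) (br (E k) Y)) Z) - (\<Sum>k\<in>UNIV. g (br Z (ff k)) (br (E k) Y))) / 2"
proof -
  have z: "(\<Sum>k\<in>UNIV. g (br (br (E k) Y) Z) (ff k)) = 0"
    using N2[of Y Z] trs[of "\<lambda>u. br (br u Y) Z"] by simp
  have "(\<Sum>k\<in>UNIV. KK (br (E k) Y) Z (ff k)) =
     ((\<Sum>k\<in>UNIV. g (br (br (E k) Y) Z) (ff k)) - (\<Sum>k\<in>UNIV. g (br Z (ff k)) (br (E k) Y)) + (\<Sum>k\<in>UNIV. g (br (ff k) (br (E k) Y)) Z)) / 2"
    unfolding KK_def by (simp add: sum_divide_distrib[symmetric] sum.distrib sum_subtractf)
  then show ?thesis using z by simp
qed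

lemma KKprod: "KK Y (ff k) (E m) * KK (E k) Z (ff m) =
  (g (br Y (ff k)) (E m) * g (br (E k) Z) (ff m) - g (br Y (ff k)) (E m) * g (br Z (ff m)) (E k)
   + g (br Y (ff k)) (E m) * g (br (ff m) (E k)) Z
   - g (br (ff k) (E m)) Y * g (br (E k) Z) (ff m) + g (br (ff k) (E m)) Y * g (br Z (ff m)) (E k)
   - g (br (ff k) (E m)) Y * g (br (ff m) (E k)) Z
   + g (br (E m) Y) (ff k) * g (br (E k) Z) (ff m) - g (br (E m) Y) (ff k) * g (br Z (ff m)) (E k)
   + g (br (E m) Y) (ff k) * g (br (ff m) (E k)) Z) / 4"
  unfolding KK_def by (simp add: algebra_simps divide_simps)

lemma ric_formula: "ricci_tensor br g Y Z =
   (\<Sum>m\<in>UNIV. g (br Z (ff m)) (br (E m) Y)) / 2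
   - (\<Sum>k\<in>UNIV. \<Sum>m\<in>UNIV. g (br (ff k) (E m)) Y * g (br (ff m) (E k)) Z) / 4"
proof -
  have "(\<Sum>k\<in>UNIV. g (nb Y (ff k)) (nb (E k) Z)) = (\<Sum>k\<in>UNIV. \<Sum>m\<in>UNIV. KK Y (ff k) (E m) * KK (E k) Z (ff m))"
    by (simp add: T2_exp)
  also have "\<dots> = ((\<Sum>k\<in>UNIV. \<Sum>m\<in>UNIV. g (br Y (ff k)) (E m) * g (br (E k) Z) (ff m))
     - (\<Sum>k\<in>UNIV. \<Sum>m\<in>UNIV. g (br Y (ff k)) (E m) * g (br Z (ff m)) (E k))
     + (\<Sum>k\<in>UNIV. \<Sum>m\<in>UNIV. g (br Y (ff k)) (E m) * g (br (ff m) (E k)) Z)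
     - (\<Sum>k\<in>UNIV. \<Sum>m\<in>UNIV. g (br (ff k) (E m)) Y * g (br (E k) Z) (ff m))
     + (\<Sum>k\<in>UNIV. \<Sum>m\<in>UNIV. g (br (ff k) (E m)) Y * g (br Z (ff m)) (E k))
     - (\<Sum>k\<in>UNIV. \<Sum>m\<in>UNIV. g (br (ff k) (E m)) Y * g (br (ff m) (E k)) Z)
     + (\<Sum>k\<in>UNIV. \<Sum>m\<in>UNIV. g (br (E m) Y) (ff k) * g (br (E k) Z) (ff m))
     - (\<Sum>k\<in>UNIV. \<Sum>m\<in>UNIV. g (br (E m) Y) (ff k) * g (br Z (ff m)) (E k))
     + (\<Sum>k\<in>UNIV. \<Sum>m\<in>UNIV. g (br (E m) Y) (ff k) * g (br (ff m) (E k)) Z)) / 4"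
    by (simp only: KKprod sum_divide_distrib[symmetric] sum.distrib sum_subtractf)
  finally have t2: "(\<Sum>k\<in>UNIV. g (nb Y (ff k)) (nb (E k) Z)) = \<dots>" .
  show ?thesis
    unfolding ric_expand t2 T3 D11 D12 D13 D21 D22 D31 D32 D33 R1 R2 R3
    by (simp add: field_simps)
qed

end



context nilmet begin

lemma ric_lin: "linear (\<lambda>Z. ricci_tensor br g Y Z)"
  unfolding ric_formula
  by (rule linearI) (simp_all add: gs brs sum.distrib algebra_simps sum_distrib_left add_divide_distrib diff_divide_distrib)

lemma Ric_prop: "g (ricci_operator br g Y) Z = ricci_tensor br g Y Z"
proof -
  obtain v where v: "\<forall>Z. g v Z = ricci_tensor br g Y Z" using riesz[OF ric_lin] by blast
  have "ricci_operator br g Y = v"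
    unfolding ricci_operator_def
  proof (rule the1_equality)
    show "\<exists>!v. \<forall>Z. g v Z = ricci_tensor br g Y Z" using v g_inj by metis
    show "\<forall>Z. g v Z = ricci_tensor br g Y Z" using v by blast
  qed
  then show ?thesis using v by simp
qed

lemma gbr_swap: "g (br a b) (br c d) = g (br b a) (br d c)"
  by (simp add: anti[of b a] anti[of d c] gs)

lemma trRD:
  assumes der: "derivation br D"
  shows "tr (ricci_operator br g \<circ> D) = 0"
proof -
  have linD: "linear D" using der by (simp add: derivation_def)
  have Dbr: "D (br a b) = br (D a) b + br a (D b)" for a b using der by (simp add: derivation_def)
  note Ds = linear_add[OF linD] linear_scale[OF linD]
  define A where "A = (\<Sum>i\<in>UNIV. \<Sum>m\<in>UNIV. g (br (ff i) (ff m)) (br (E m) (D (E i))))"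
  have "tr (ricci_operator br g \<circ> D) = (\<Sum>i\<in>UNIV. ricci_tensor br g (D (E i)) (ff i))"
    by (simp add: tr_def gf'[symmetric] Ric_prop)
  also have "\<dots> = A / 2 - (\<Sum>i\<in>UNIV. \<Sum>k\<in>UNIV. \<Sum>m\<in>UNIV. g (br (ff k) (E m)) (D (E i)) * g (br (ff m) (E k)) (ff i)) / 4"
    unfolding ric_formula A_def by (simp add: sum_subtractf sum_divide_distrib)
  also have "(\<Sum>i\<in>UNIV. \<Sum>k\<in>UNIV. \<Sum>m\<in>UNIV. g (br (ff k) (E m)) (D (E i)) * g (br (ff m) (E k)) (ff i))
     = (\<Sum>k\<in>UNIV. \<Sum>m\<in>UNIV. \<Sum>i\<in>UNIV. g (br (ff k) (E m)) (D (E i)) * g (br (ff m) (E k)) (ff i))"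
    by (rule trans[OF sum.swap]) (rule sum.cong[OF refl], rule sum.swap)
  also have "\<dots> = (\<Sum>k\<in>UNIV. \<Sum>m\<in>UNIV. g (br (ff k) (E m)) (D (br (ff m) (E k))))"
    by (intro sum.cong refl) (rule C2'[where \<phi>="\<lambda>w. g (br (ff k) (E m)) (D w)" for k m], rule linI, simp_all add: gs Ds)
  also have "\<dots> = (\<Sum>k\<in>UNIV. \<Sum>m\<in>UNIV. g (br (ff k) (E m)) (br (D (ff m)) (E k)))
      + (\<Sum>k\<in>UNIV. \<Sum>m\<in>UNIV. g (br (ff k) (E m)) (br (ff m) (D (E k))))"
    by (simp add: Dbr gs sum.distrib)
  also have "(\<Sum>k\<in>UNIV. \<Sum>m\<in>UNIV. g (br (ff k) (E m)) (br (D (ff m)) (E k))) = A"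
  proof -
    have "(\<Sum>k\<in>UNIV. \<Sum>m\<in>UNIV. g (br (ff k) (E m)) (br (D (ff m)) (E k)))
        = (\<Sum>k\<in>UNIV. \<Sum>m\<in>UNIV. g (br (ff k) (ff m)) (br (D (E m)) (E k)))"
      by (rule sum.cong[OF refl]) (rule Csym[where B="\<lambda>u v. g (br (ff k) u) (br (D v) (E k))" for k], rule bilI, simp_all add: gs brs Ds)
    also have "\<dots> = (\<Sum>m\<in>UNIV. \<Sum>k\<in>UNIV. g (br (ff m) (ff k)) (br (E k) (D (E m))))"
      by (subst sum.swap) (intro sum.cong refl, rule gbr_swap)
    finally show ?thesis unfolding A_def .
  qed
  also have "(\<Sum>k\<in>UNIV. \<Sum>m\<in>UNIV. g (br (ff k) (E m)) (br (ff m) (D (E k)))) = A"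
    unfolding A_def
    by (rule sum.cong[OF refl]) (rule Csym[where B="\<lambda>u v. g (br (ff k) u) (br v (D (E k)))" for k], rule bilI, simp_all add: gs brs)
  finally show ?thesis by (simp add: comp_def)
qed

end

theorem corollary2p2:
  fixes br :: "real^'n \<Rightarrow> real^'n \<Rightarrow> real^'n"
    and g :: "real^'n \<Rightarrow> real^'n \<Rightarrow> real"
    and D :: "real^'n \<Rightarrow> real^'n"
    and lam :: real
  assumes "lie_algebra br" and "nilpotent_lie br" and "metric g"
    and "derivation br D"
    and "\<forall>x. ricci_operator br g x = lam *\<^sub>R x + D x"
  shows "tr (D \<circ> D) = - lam * tr D \<and>
         tr (ricci_operator br g \<circ> ricci_operator br g) = lam * tr (ricci_operator br g)"
proof -
  interpret nilmet br g using assms(1-3) by unfold_locales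
  have linD: "linear D" using assms(4) by (simp add: derivation_def)
  note Ds = linear_add[OF linD] linear_scale[OF linD]
  have R: "ricci_operator br g x = lam *\<^sub>R x + D x" for x using assms(5) by blast
  have t0: "tr (ricci_operator br g \<circ> D) = 0" by (rule trRD[OF assms(4)])
  have t1: "tr (ricci_operator br g \<circ> D) = lam * tr D + tr (D \<circ> D)"
    by (simp add: tr_def R sum.distrib sum_distrib_left)
  have t2: "tr (ricci_operator br g \<circ> ricci_operator br g) = lam * tr (ricci_operator br g) + lam * tr D + tr (D \<circ> D)"
    by (simp add: tr_def R Ds sum.distrib sum_distrib_left algebra_simps)
  show ?thesis using t0 t1 t2 by simp
qed


end
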